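(* Let $S$ be a finite $p$-group of nilpotency class two, let $T\trianglelefteq S$ with $T=T_1\times\cdots\times T_n$, where the $T_i$ are pairwise isomorphic groups of nilpotency class two. Suppose $s\in S\setminus T$ permutes the set $\{T_1,\dots,T_n\}$ by conjugation. Then $s$ normalizes each $T_i$. *)

theory Defs
  imports "HOL-Algebra.Algebra"
begin

definition grp_commutator :: "('a, 'b) monoid_scheme \<Rightarrow> 'a \<Rightarrow> 'a \<Rightarrow> 'a" where
  "grp_commutator G x g = inv\<^bsub>G\<^esub> x \<otimes>\<^bsub>G\<^esub> inv\<^bsub>G\<^esub> g \<otimes>\<^bsub>G\<^esub> x \<otimes>\<^bsub>G\<^esub> g"

(* lower central series: gamma_1 = G (index 0 here), gamma_{k+1} = [gamma_k, G] *)
primrec lower_central :: "('a, 'b) monoid_scheme \<Rightarrow> nat \<Rightarrow> 'a set" where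
  "lower_central G 0 = carrier G"
| "lower_central G (Suc k) =
     generate G {grp_commutator G x g | x g. x \<in> lower_central G k \<and> g \<in> carrier G}"

definition nilpotency_class_two :: "('a, 'b) monoid_scheme \<Rightarrow> bool" where
  "nilpotency_class_two G \<longleftrightarrow> group G \<and>
     lower_central G 2 = {\<one>\<^bsub>G\<^esub>} \<and> lower_central G 1 \<noteq> {\<one>\<^bsub>G\<^esub>}"

definition finite_p_group :: "('a, 'b) monoid_scheme \<Rightarrow> nat \<Rightarrow> bool" where
  "finite_p_group G p \<longleftrightarrow> group G \<and> Factorial_Ring.prime p \<and> finite (carrier G) \<and>
     (\<exists>k. card (carrier G) = p ^ k)"

primrec iprod :: "('a, 'b) monoid_scheme \<Rightarrow> (nat \<Rightarrow> 'a) \<Rightarrow> nat \<Rightarrow> 'a" where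
  "iprod G f 0 = \<one>\<^bsub>G\<^esub>"
| "iprod G f (Suc n) = iprod G f n \<otimes>\<^bsub>G\<^esub> f n"

definition internal_direct_product ::
    "('a, 'b) monoid_scheme \<Rightarrow> 'a set \<Rightarrow> (nat \<Rightarrow> 'a set) \<Rightarrow> nat \<Rightarrow> bool" where
  "internal_direct_product G T Ts n \<longleftrightarrow>
     (\<forall>i<n. subgroup (Ts i) G) \<and>
     (\<forall>i<n. \<forall>j<n. i \<noteq> j \<longrightarrow> (\<forall>x\<in>Ts i. \<forall>y\<in>Ts j. x \<otimes>\<^bsub>G\<^esub> y = y \<otimes>\<^bsub>G\<^esub> x)) \<and>
     bij_betw (\<lambda>f. iprod G f n) (Pi\<^sub>E {..<n} Ts) T"

definition conj_by :: "('a, 'b) monoid_scheme \<Rightarrow> 'a \<Rightarrow> 'a set \<Rightarrow> 'a set" where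
  "conj_by G s A = (\<lambda>x. s \<otimes>\<^bsub>G\<^esub> x \<otimes>\<^bsub>G\<^esub> inv\<^bsub>G\<^esub> s) ` A"

end

theory Submission
  imports Defs
begin

lemma gen_sub_one:
  assumes "group H" "A \<subseteq> {\<one>\<^bsub>H\<^esub>}"
  shows "generate H A \<subseteq> {\<one>\<^bsub>H\<^esub>}"
proof
  fix x assume "x \<in> generate H A"
  then show "x \<in> {\<one>\<^bsub>H\<^esub>}"
  proof (induction rule: generate.induct)
    case one then show ?case by simp
  next
    case (incl h) then show ?case using assms by auto
  next
    case (inv h) then have "h = \<one>\<^bsub>H\<^esub>" using assms by auto
    then show ?case using assms(1) by (simp add: group.is_monoid monoid.inv_one)
  next
    case (eng a b) then show ?case using assms(1) by (simp add: group.is_monoid monoid.l_one monoid.one_closed)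
  qed
qed

lemma iprod_single:
  assumes "\<And>k. k \<noteq> i \<Longrightarrow> k < m \<Longrightarrow> f k = \<one>\<^bsub>G\<^esub>" "monoid G" "z \<in> carrier G" "f i = z"
  shows "iprod G f m = (if i < m then z else \<one>\<^bsub>G\<^esub>)"
  using assms(1)
proof (induction m)
  case 0 then show ?case by simp
next
  case (Suc m)
  have IH: "iprod G f m = (if i < m then z else \<one>\<^bsub>G\<^esub>)" using Suc by auto
  show ?case
  proof (cases "m = i")
    case True then show ?thesis using IH assms by (simp add: monoid.l_one)
  next
    case False
    then have "f m = \<one>\<^bsub>G\<^esub>" using Suc.prems by auto
    then show ?thesis using IH assms False by (auto simp: monoid.r_one monoid.one_closed)
  qed
qed

lemma disjoint_factors:
  assumes "group G" "internal_direct_product G T Ts n" "i < n" "j < n" "i \<noteq> j"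
    "z \<in> Ts i" "z \<in> Ts j"
  shows "z = \<one>\<^bsub>G\<^esub>"
proof -
  have sg: "\<And>k. k < n \<Longrightarrow> subgroup (Ts k) G" using assms(2) unfolding internal_direct_product_def by auto
  have inj: "inj_on (\<lambda>f. iprod G f n) (Pi\<^sub>E {..<n} Ts)"
    using assms(2) unfolding internal_direct_product_def bij_betw_def by auto
  have zc: "z \<in> carrier G" using sg[OF assms(3)] assms(6) subgroup.subset by blast
  define f1 where "f1 = (\<lambda>k. if k = i then z else if k < n then \<one>\<^bsub>G\<^esub> else undefined)"
  define f2 where "f2 = (\<lambda>k. if k = j then z else if k < n then \<one>\<^bsub>G\<^esub> else undefined)"
  have m: "monoid G" using assms(1) group.is_monoid by blast
  have f1P: "f1 \<in> Pi\<^sub>E {..<n} Ts" using assms sg[THEN subgroup.one_closed] unfolding f1_def by (auto simp: PiE_def extensional_def)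
  have f2P: "f2 \<in> Pi\<^sub>E {..<n} Ts" using assms sg[THEN subgroup.one_closed] unfolding f2_def by (auto simp: PiE_def extensional_def)
  have "iprod G f1 n = z" using iprod_single[of i n f1 G z] m zc assms(3) unfolding f1_def by auto
  moreover have "iprod G f2 n = z" using iprod_single[of j n f2 G z] m zc assms(4) unfolding f2_def by auto
  ultimately have "f1 = f2" using inj f1P f2P by (metis inj_onD)
  then have "f1 i = f2 i" by simp
  then show ?thesis using assms(3,5) unfolding f1_def f2_def by auto
qed

theorem mainTheorem3:
  fixes S :: "('a, 'b) monoid_scheme" and p n :: nat
    and T :: "'a set" and Ts :: "nat \<Rightarrow> 'a set" and s :: 'a
  assumes "finite_p_group S p"
    and "nilpotency_class_two S"
    and "T \<lhd> S"
    and "internal_direct_product S T Ts n"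
    and "\<forall>i<n. \<forall>j<n. S\<lparr>carrier := Ts i\<rparr> \<cong> S\<lparr>carrier := Ts j\<rparr>"
    and "\<forall>i<n. nilpotency_class_two (S\<lparr>carrier := Ts i\<rparr>)"
    and "s \<in> carrier S - T"
    and "\<forall>i<n. \<exists>j<n. conj_by S s (Ts i) = Ts j"
  shows "\<forall>i<n. conj_by S s (Ts i) = Ts i"
proof (intro allI impI)
  fix i assume i: "i < n"
  have G: "group S" using assms(2) unfolding nilpotency_class_two_def by auto
  have sS: "s \<in> carrier S" using assms(7) by auto
  have sg: "\<And>k. k < n \<Longrightarrow> subgroup (Ts k) S" using assms(4) unfolding internal_direct_product_def by auto
  obtain j where j: "j < n" "conj_by S s (Ts i) = Ts j" using assms(8) i by blast
  define H where "H = S\<lparr>carrier := Ts i\<rparr>"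
  have ncH: "nilpotency_class_two H" using assms(6) i unfolding H_def by auto
  have GH: "group H" using ncH unfolding nilpotency_class_two_def by auto
  have "lower_central H 1 \<noteq> {\<one>\<^bsub>H\<^esub>}" using ncH unfolding nilpotency_class_two_def by auto
  then obtain x y where xy: "x \<in> Ts i" "y \<in> Ts i" "grp_commutator H x y \<noteq> \<one>\<^bsub>H\<^esub>"
  proof -
    assume r: "\<And>x y. x \<in> Ts i \<Longrightarrow> y \<in> Ts i \<Longrightarrow> grp_commutator H x y \<noteq> \<one>\<^bsub>H\<^esub> \<Longrightarrow> thesis"
    show thesis
    proof (rule ccontr)
      assume "\<not> thesis"
      then have "{grp_commutator H x g | x g. x \<in> lower_central H 0 \<and> g \<in> carrier H} \<subseteq> {\<one>\<^bsub>H\<^esub>}"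
        using r unfolding H_def by auto
      from gen_sub_one[OF GH this] have "lower_central H 1 \<subseteq> {\<one>\<^bsub>H\<^esub>}" by simp
      moreover have "\<one>\<^bsub>H\<^esub> \<in> lower_central H 1" by (simp add: generate.one)
      ultimately show False using \<open>lower_central H 1 \<noteq> {\<one>\<^bsub>H\<^esub>}\<close> by auto
    qed
  qed
  define c where "c = grp_commutator S x y"
  have xS: "x \<in> carrier S" "y \<in> carrier S" using xy sg[OF i] subgroup.subset by blast+
  have ceq: "grp_commutator H x y = c"
    unfolding c_def grp_commutator_def H_def using group.m_inv_consistent[OF G sg[OF i]] xy by simp
  have c1: "c \<noteq> \<one>\<^bsub>S\<^esub>" using xy(3) ceq unfolding H_def by simp
  have cTi: "c \<in> Ts i" unfolding c_def grp_commutator_def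
    using xy sg[OF i] by (simp add: subgroup.m_closed subgroup.m_inv_closed)
  have cS: "c \<in> carrier S" using cTi sg[OF i] subgroup.subset by blast
  have "c \<in> lower_central S 1" unfolding c_def using xS by (auto intro: generate.incl)
  then have "grp_commutator S c s \<in> lower_central S 2"
    using sS by (auto simp: numeral_2_eq_2 intro: generate.incl)
  then have "grp_commutator S c s = \<one>\<^bsub>S\<^esub>" using assms(2) unfolding nilpotency_class_two_def by auto
  then have e1: "(inv\<^bsub>S\<^esub> c \<otimes>\<^bsub>S\<^esub> inv\<^bsub>S\<^esub> s) \<otimes>\<^bsub>S\<^esub> (c \<otimes>\<^bsub>S\<^esub> s) = \<one>\<^bsub>S\<^esub>"
    unfolding grp_commutator_def using G cS sS
    by (simp add: group.is_monoid monoid.m_assoc group.inv_closed monoid.m_closed)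
  have "s \<otimes>\<^bsub>S\<^esub> c \<otimes>\<^bsub>S\<^esub> inv\<^bsub>S\<^esub> s = c"
  proof -
    interpret S: group S by (rule G)
    have "inv\<^bsub>S\<^esub> (c \<otimes>\<^bsub>S\<^esub> s) = inv\<^bsub>S\<^esub> c \<otimes>\<^bsub>S\<^esub> inv\<^bsub>S\<^esub> s"
      using e1 cS sS by (intro S.inv_equality) auto
    then have "c \<otimes>\<^bsub>S\<^esub> s = inv\<^bsub>S\<^esub> (inv\<^bsub>S\<^esub> c \<otimes>\<^bsub>S\<^esub> inv\<^bsub>S\<^esub> s)" using cS sS by (metis S.inv_inv S.m_closed)
    also have "\<dots> = s \<otimes>\<^bsub>S\<^esub> c" using cS sS by (simp add: S.inv_mult_group)
    finally have comm: "c \<otimes>\<^bsub>S\<^esub> s = s \<otimes>\<^bsub>S\<^esub> c" .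
    have "s \<otimes>\<^bsub>S\<^esub> c \<otimes>\<^bsub>S\<^esub> inv\<^bsub>S\<^esub> s = c \<otimes>\<^bsub>S\<^esub> s \<otimes>\<^bsub>S\<^esub> inv\<^bsub>S\<^esub> s" using comm by simp
    also have "\<dots> = c" using cS sS by (simp add: S.m_assoc)
    finally show ?thesis .
  qed
  then have "c \<in> conj_by S s (Ts i)" unfolding conj_by_def
    by (rule image_eqI[where x=c, OF sym]) (rule cTi)
  then have "c \<in> Ts j" using j by simp
  then have "j = i" using disjoint_factors[OF G assms(4) i j(1) _ cTi] c1 by auto
  then show "conj_by S s (Ts i) = Ts i" using j by simp
qed

end
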